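(* Let $G$ be a graph whose twin graph $G^*$ is isomorphic to $K_1+P_4$, where the degree-4 vertex is of any type and the other four vertices are of type (1K); furthermore, no two non-adjacent vertices of $G^*$ are both of type (K), and no two adjacent vertices of $G^*$ are such that one is of type (K) and the other of type (N). Then $D(G)\neq n(G)-2$.
   Context: All graphs are finite and simple; $n(G)=|V(G)|$; $N_G(u)$ is the neighborhood of $u$; $P_4$ is the path on four vertices and the join $G+H$ is obtained from the disjoint union of $G$ and $H$ by adding all edges between $V(G)$ and $V(H)$. A distinguishing coloring of a graph $G$ is a (not necessarily proper) vertex coloring such that the only automorphism of $G$ mapping every vertex to a vertex of the same color is the identity; the distinguishing number $D(G)$ is the minimum number of colors in a distinguishing coloring of $G$. Two distinct vertices $u,v$ are twins if $N_G(u)\setminus\{v\}=N_G(v)\setminus\{u\}$. The relation $u\equiv v$ iff $u=v$ or $u,v$ are twins is an equivalence relation; the class of $v$ is denoted $v^*$. The twin graph $G^*$ has the equivalence classes as vertices, distinct classes $u^*,v^*$ being adjacent iff $uv\in E(G)$. Each class induces a complete or an edgeless graph. A class $v^*$ is of type (1) if $|v^*|=1$, of type (K) if $|v^*|\ge 2$ and it induces a complete graph, and of type (N) if $|v^*|\ge2$ and it induces an edgeless graph; type (1K) means type (1) or (K), type (1N) means (1) or (N), and type (KN) means (K) or (N). *)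

theory Defs
  imports Main
begin

definition simple_graph :: "'a set \<Rightarrow> ('a \<Rightarrow> 'a \<Rightarrow> bool) \<Rightarrow> bool" where
  "simple_graph V E \<longleftrightarrow> finite V \<and> (\<forall>u v. E u v \<longrightarrow> u \<in> V \<and> v \<in> V)
     \<and> (\<forall>u v. E u v \<longrightarrow> E v u) \<and> (\<forall>u. \<not> E u u)"

definition nbhd :: "'a set \<Rightarrow> ('a \<Rightarrow> 'a \<Rightarrow> bool) \<Rightarrow> 'a \<Rightarrow> 'a set" where
  "nbhd V E u = {w \<in> V. E u w}"

definition graph_iso :: "'a set \<Rightarrow> ('a \<Rightarrow> 'a \<Rightarrow> bool) \<Rightarrow> 'b set \<Rightarrow> ('b \<Rightarrow> 'b \<Rightarrow> bool) \<Rightarrow> ('a \<Rightarrow> 'b) \<Rightarrow> bool" where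
  "graph_iso V E W F f \<longleftrightarrow> bij_betw f V W \<and> (\<forall>u\<in>V. \<forall>v\<in>V. E u v \<longleftrightarrow> F (f u) (f v))"

definition automorphism :: "'a set \<Rightarrow> ('a \<Rightarrow> 'a \<Rightarrow> bool) \<Rightarrow> ('a \<Rightarrow> 'a) \<Rightarrow> bool" where
  "automorphism V E f \<longleftrightarrow> graph_iso V E V E f"

definition distinguishing :: "'a set \<Rightarrow> ('a \<Rightarrow> 'a \<Rightarrow> bool) \<Rightarrow> ('a \<Rightarrow> 'c) \<Rightarrow> bool" where
  "distinguishing V E c \<longleftrightarrow>
     (\<forall>f. automorphism V E f \<and> (\<forall>v\<in>V. c (f v) = c v) \<longrightarrow> (\<forall>v\<in>V. f v = v))"

definition distinguishing_number :: "'a set \<Rightarrow> ('a \<Rightarrow> 'a \<Rightarrow> bool) \<Rightarrow> nat" where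
  "distinguishing_number V E =
     (LEAST k. \<exists>c :: 'a \<Rightarrow> nat. c ` V \<subseteq> {..<k} \<and> distinguishing V E c)"

definition twins :: "'a set \<Rightarrow> ('a \<Rightarrow> 'a \<Rightarrow> bool) \<Rightarrow> 'a \<Rightarrow> 'a \<Rightarrow> bool" where
  "twins V E u v \<longleftrightarrow> u \<in> V \<and> v \<in> V \<and> u \<noteq> v \<and> nbhd V E u - {v} = nbhd V E v - {u}"

definition twin_class :: "'a set \<Rightarrow> ('a \<Rightarrow> 'a \<Rightarrow> bool) \<Rightarrow> 'a \<Rightarrow> 'a set" where
  "twin_class V E v = {u \<in> V. u = v \<or> twins V E u v}"

text \<open>The twin graph G*: vertices are the twin classes, distinct classes adjacent iff some
  (equivalently every) pair of representatives is adjacent.\<close>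
definition twin_vertices :: "'a set \<Rightarrow> ('a \<Rightarrow> 'a \<Rightarrow> bool) \<Rightarrow> 'a set set" where
  "twin_vertices V E = twin_class V E ` V"

definition twin_adj :: "('a \<Rightarrow> 'a \<Rightarrow> bool) \<Rightarrow> 'a set \<Rightarrow> 'a set \<Rightarrow> bool" where
  "twin_adj E X Y \<longleftrightarrow> X \<noteq> Y \<and> (\<exists>u\<in>X. \<exists>v\<in>Y. E u v)"

definition type_1 :: "'a set \<Rightarrow> bool" where
  "type_1 X \<longleftrightarrow> card X = 1"

definition type_K :: "('a \<Rightarrow> 'a \<Rightarrow> bool) \<Rightarrow> 'a set \<Rightarrow> bool" where
  "type_K E X \<longleftrightarrow> card X \<ge> 2 \<and> (\<forall>u\<in>X. \<forall>v\<in>X. u \<noteq> v \<longrightarrow> E u v)"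

definition type_N :: "('a \<Rightarrow> 'a \<Rightarrow> bool) \<Rightarrow> 'a set \<Rightarrow> bool" where
  "type_N E X \<longleftrightarrow> card X \<ge> 2 \<and> (\<forall>u\<in>X. \<forall>v\<in>X. \<not> E u v)"

text \<open>K_1 + P_4 on vertices {0..4}: vertex 0 is the degree-4 vertex, 1-2-3-4 is the path.\<close>
definition k1p4_edge :: "nat \<Rightarrow> nat \<Rightarrow> bool" where
  "k1p4_edge i j \<longleftrightarrow>
     (i = 0 \<and> j \<in> {1..4}) \<or> (j = 0 \<and> i \<in> {1..4}) \<or>
     (i \<in> {1..4} \<and> j \<in> {1..4} \<and> (i = j + 1 \<or> j = i + 1))"

end

theory Submission
  imports Defs
begin

lemma twins_sym: "twins V E a b \<Longrightarrow> twins V E b a"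
  unfolding twins_def by auto

lemma twins_trans:
  assumes g: "simple_graph V E" and ab: "twins V E a b" and bc: "twins V E b c" and ne: "a \<noteq> c"
  shows "twins V E a c"
proof -
  have sym: "\<And>u v. E u v \<Longrightarrow> E v u" and irr: "\<And>u. \<not> E u u"
    and inV: "\<And>u v. E u v \<Longrightarrow> u \<in> V \<and> v \<in> V"
    using g unfolding simple_graph_def by blast+
  have 1: "nbhd V E a - {b} = nbhd V E b - {a}" and 2: "nbhd V E b - {c} = nbhd V E c - {b}"
    and abne: "a \<noteq> b" "b \<noteq> c" and V: "a \<in> V" "b \<in> V" "c \<in> V"
    using ab bc unfolding twins_def by auto
  have "nbhd V E a - {c} \<subseteq> nbhd V E c - {a}"
  proof
    fix w assume w: "w \<in> nbhd V E a - {c}"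
    show "w \<in> nbhd V E c - {a}"
    proof (cases "w = b")
      case True
      hence "E a b" using w unfolding nbhd_def by auto
      hence "a \<in> nbhd V E b - {c}" using sym V ne unfolding nbhd_def by auto
      hence "a \<in> nbhd V E c" using 2 by auto
      hence "E c a" unfolding nbhd_def by auto
      hence "c \<in> nbhd V E a - {b}" using sym V abne unfolding nbhd_def by auto
      hence "E b c" using 1 unfolding nbhd_def by auto
      thus ?thesis using True sym V ne abne unfolding nbhd_def by auto
    next
      case False
      have "w \<noteq> a" using w irr unfolding nbhd_def by auto
      hence "w \<in> nbhd V E b" using w False 1 by auto
      hence "w \<in> nbhd V E c" using w 2 by auto
      thus ?thesis using \<open>w \<noteq> a\<close> by auto
    qed
  qed
  moreover have "nbhd V E c - {a} \<subseteq> nbhd V E a - {c}"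
  proof
    fix w assume w: "w \<in> nbhd V E c - {a}"
    show "w \<in> nbhd V E a - {c}"
    proof (cases "w = b")
      case True
      hence "E c b" using w unfolding nbhd_def by auto
      hence "c \<in> nbhd V E b - {a}" using sym V ne unfolding nbhd_def by auto
      hence "c \<in> nbhd V E a" using 1 by auto
      hence "E a c" unfolding nbhd_def by auto
      hence "a \<in> nbhd V E c - {b}" using sym V abne unfolding nbhd_def by auto
      hence "E b a" using 2 unfolding nbhd_def by auto
      thus ?thesis using True sym V ne abne unfolding nbhd_def by auto
    next
      case False
      have "w \<noteq> c" using w irr unfolding nbhd_def by auto
      hence "w \<in> nbhd V E b" using w False 2 by auto
      hence "w \<in> nbhd V E a" using w 1 by auto
      thus ?thesis using \<open>w \<noteq> c\<close> by auto
    qed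
  qed
  ultimately show ?thesis using V ne unfolding twins_def by blast
qed

lemma class_eq:
  assumes g: "simple_graph V E" and y: "y \<in> twin_class V E x"
  shows "twin_class V E y = twin_class V E x"
proof -
  have yx: "y = x \<or> twins V E y x" using y unfolding twin_class_def by auto
  show ?thesis
  proof (cases "y = x")
    case True thus ?thesis by simp
  next
    case False
    hence t: "twins V E y x" using yx by auto
    show ?thesis
      unfolding twin_class_def
      using t twins_sym[OF t] twins_trans[OF g] unfolding twins_def[of V E _ x] twins_def[of V E _ y]
      by (smt (verit) Collect_cong twins_def twins_trans[OF g])
  qed
qed

lemma twin_step:
  assumes "twins V E u x" "E u v" "v \<noteq> x" "v \<in> V"
  shows "E x v"
proof -
  have "v \<in> nbhd V E u - {x}" using assms unfolding nbhd_def by auto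
  thus ?thesis using assms(1) unfolding twins_def nbhd_def by auto
qed

lemma adj_reps:
  assumes g: "simple_graph V E" and x: "x \<in> V" and y: "y \<in> V"
    and ta: "twin_adj E (twin_class V E x) (twin_class V E y)"
  shows "E x y"
proof -
  have sym: "\<And>u v. E u v \<Longrightarrow> E v u" and inV: "\<And>u v. E u v \<Longrightarrow> u \<in> V \<and> v \<in> V"
    using g unfolding simple_graph_def by blast+
  obtain u v where u: "u \<in> twin_class V E x" and v: "v \<in> twin_class V E y" and uv: "E u v"
    and ne: "twin_class V E x \<noteq> twin_class V E y"
    using ta unfolding twin_adj_def by blast
  have xy: "x \<notin> twin_class V E y"
    using class_eq[OF g] ne by metis
  have yx: "y \<notin> twin_class V E x"
    using class_eq[OF g] ne by metis
  have xv: "E x v"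
  proof (cases "u = x")
    case True thus ?thesis using uv by simp
  next
    case False
    hence "twins V E u x" using u unfolding twin_class_def by auto
    moreover have "v \<noteq> x" using v xy by auto
    ultimately show ?thesis using twin_step uv inV by metis
  qed
  show ?thesis
  proof (cases "v = y")
    case True thus ?thesis using xv by simp
  next
    case False
    hence t: "twins V E v y" using v unfolding twin_class_def by auto
    have "y \<noteq> x" using yx x unfolding twin_class_def by auto
    hence "E y x" using twin_step[OF t sym[OF xv]] x by auto
    thus ?thesis using sym by auto
  qed
qed

theorem lemma4p9:
  fixes V :: "'a set" and E :: "'a \<Rightarrow> 'a \<Rightarrow> bool" and \<phi> :: "nat \<Rightarrow> 'a set"
  assumes "simple_graph V E"
    and "graph_iso {0..4} k1p4_edge (twin_vertices V E) (twin_adj E) \<phi>"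
    and "\<forall>i\<in>{1..4}. type_1 (\<phi> i) \<or> type_K E (\<phi> i)"
    and "\<forall>X\<in>twin_vertices V E. \<forall>Y\<in>twin_vertices V E.
           X \<noteq> Y \<and> \<not> twin_adj E X Y \<longrightarrow> \<not> (type_K E X \<and> type_K E Y)"
    and "\<forall>X\<in>twin_vertices V E. \<forall>Y\<in>twin_vertices V E.
           twin_adj E X Y \<longrightarrow> \<not> (type_K E X \<and> type_N E Y)"
  shows "distinguishing_number V E \<noteq> card V - 2"
proof -
  note g = assms(1)
  have fin: "finite V" using g unfolding simple_graph_def by blast
  have sym: "\<And>u v. E u v \<Longrightarrow> E v u"
    using g unfolding simple_graph_def by blast
  have bij: "bij_betw \<phi> {0..4} (twin_vertices V E)"
    and iso: "\<forall>i\<in>{0..4}. \<forall>j\<in>{0..4}. k1p4_edge i j \<longleftrightarrow> twin_adj E (\<phi> i) (\<phi> j)"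
    using assms(2) unfolding graph_iso_def by auto
  have ex: "\<forall>i\<in>{0..4}. \<exists>r\<in>V. \<phi> i = twin_class V E r"
  proof
    fix i assume i: "i \<in> {0..4::nat}"
    have "\<phi> i \<in> \<phi> ` {0..4}" using i by blast
    hence "\<phi> i \<in> twin_class V E ` V"
      using bij_betw_imp_surj_on[OF bij] unfolding twin_vertices_def by simp
    thus "\<exists>r\<in>V. \<phi> i = twin_class V E r" by blast
  qed
  obtain r0 where r0: "r0 \<in> V" "\<phi> 0 = twin_class V E r0" using ex by fastforce
  obtain r1 where r1: "r1 \<in> V" "\<phi> 1 = twin_class V E r1" using ex by fastforce
  obtain r2 where r2: "r2 \<in> V" "\<phi> 2 = twin_class V E r2" using ex by fastforce
  obtain r3 where r3: "r3 \<in> V" "\<phi> 3 = twin_class V E r3" using ex by fastforce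
  obtain r4 where r4: "r4 \<in> V" "\<phi> 4 = twin_class V E r4" using ex by fastforce
  have inj: "inj_on \<phi> {0..4}" using bij bij_betw_def by blast
  have dist: "distinct [r0,r1,r2,r3,r4]"
  proof -
    have "\<And>i j. i \<in> {0..4} \<Longrightarrow> j \<in> {0..4} \<Longrightarrow> i \<noteq> j \<Longrightarrow> \<phi> i \<noteq> \<phi> j"
      using inj unfolding inj_on_def by blast
    from this[of 0 1] this[of 0 2] this[of 0 3] this[of 0 4] this[of 1 2] this[of 1 3]
      this[of 1 4] this[of 2 3] this[of 2 4] this[of 3 4]
    show ?thesis using r0 r1 r2 r3 r4 by auto
  qed
  have edge: "\<And>i j a b. i \<in> {0..4} \<Longrightarrow> j \<in> {0..4} \<Longrightarrow> a \<in> V \<Longrightarrow> b \<in> V \<Longrightarrow>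
     \<phi> i = twin_class V E a \<Longrightarrow> \<phi> j = twin_class V E b \<Longrightarrow> a \<noteq> b \<Longrightarrow> i \<noteq> j \<Longrightarrow>
     E a b \<longleftrightarrow> k1p4_edge i j"
  proof -
    fix i j a b
    assume ij: "i \<in> {0..4}" "j \<in> {0..4}" and ab: "a \<in> V" "b \<in> V"
      and pa: "\<phi> i = twin_class V E a" and pb: "\<phi> j = twin_class V E b" and ne: "a \<noteq> b" "i \<noteq> j"
    have "\<phi> i \<noteq> \<phi> j" using inj ij ne unfolding inj_on_def by blast
    hence ta: "E a b \<Longrightarrow> twin_adj E (\<phi> i) (\<phi> j)"
      unfolding twin_adj_def pa pb twin_class_def using ab by auto
    show "E a b \<longleftrightarrow> k1p4_edge i j"
      using ta iso ij adj_reps[OF g ab] pa pb by metis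
  qed
  have e10: "E r1 r0" using edge[of 1 0 r1 r0] r0 r1 dist by (auto simp: k1p4_edge_def)
  have e12: "E r1 r2" using edge[of 1 2 r1 r2] r2 r1 dist by (auto simp: k1p4_edge_def)
  have e13: "\<not> E r1 r3" using edge[of 1 3 r1 r3] r3 r1 dist by (auto simp: k1p4_edge_def)
  have e14: "\<not> E r1 r4" using edge[of 1 4 r1 r4] r4 r1 dist by (auto simp: k1p4_edge_def)
  have e24: "\<not> E r2 r4" using edge[of 2 4 r2 r4] r4 r2 dist by (auto simp: k1p4_edge_def)
  have e04: "E r0 r4" using edge[of 0 4 r0 r4] r4 r0 dist by (auto simp: k1p4_edge_def)
  have e03: "E r0 r3" using edge[of 0 3 r0 r3] r3 r0 dist by (auto simp: k1p4_edge_def)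
  have e23: "E r2 r3" using edge[of 2 3 r2 r3] r3 r2 dist by (auto simp: k1p4_edge_def)
  define S where "S = {r0,r1,r2,r3,r4}"
  have SV: "S \<subseteq> V" using r0 r1 r2 r3 r4 S_def by auto
  have cS: "card S = 5" using dist S_def by auto
  have cVS: "card (V - S) = card V - 5" using card_Diff_subset[OF finite_subset[OF SV fin] SV] cS by simp
  have cV: "card V \<ge> 5" using card_mono[OF fin SV] cS by simp
  obtain h where h: "bij_betw h (V - S) {0..<card (V - S)}"
    using ex_bij_betw_finite_nat[of "V - S"] fin by blast
  define c where "c v = (if v = r1 then 0 else if v \<in> S then 1 else h v + 2)" for v
  have crange: "c ` V \<subseteq> {..<card V - 3}"
  proof
    fix x assume "x \<in> c ` V"
    then obtain v where v: "v \<in> V" "x = c v" by auto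
    show "x \<in> {..<card V - 3}"
    proof (cases "v \<in> S")
      case True thus ?thesis using v cV unfolding c_def by auto
    next
      case False
      hence "h v < card (V - S)" using h v bij_betw_apply by fastforce
      thus ?thesis using v False cVS cV unfolding c_def by auto
    qed
  qed
  have hinj: "inj_on h (V - S)" using h bij_betw_def by blast
  have dis: "distinguishing V E c"
    unfolding distinguishing_def
  proof (intro allI impI)
    fix f assume a: "automorphism V E f \<and> (\<forall>v\<in>V. c (f v) = c v)"
    have fb: "bij_betw f V V" and fe: "\<forall>u\<in>V. \<forall>v\<in>V. E u v \<longleftrightarrow> E (f u) (f v)"
      using a unfolding automorphism_def graph_iso_def by auto
    have fV: "\<And>v. v \<in> V \<Longrightarrow> f v \<in> V" using fb bij_betw_apply by fastforce
    have finj: "inj_on f V" using fb bij_betw_def by blast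
    have cc: "\<And>v. v \<in> V \<Longrightarrow> c (f v) = c v" using a by blast
    have out: "\<And>v. v \<in> V - S \<Longrightarrow> f v = v"
    proof -
      fix v assume v: "v \<in> V - S"
      have "c (f v) = h v + 2" using cc[of v] v unfolding c_def S_def by auto
      hence fvS: "f v \<notin> S" and "h (f v) = h v" unfolding c_def S_def
        by (auto split: if_splits)
      thus "f v = v" using hinj v fV[of v] unfolding inj_on_def by blast
    qed
    have f1: "f r1 = r1"
    proof -
      have "c (f r1) = 0" using cc[OF r1(1)] unfolding c_def by simp
      thus ?thesis unfolding c_def by (auto split: if_splits)
    qed
    have inS: "\<And>s. s \<in> {r0,r2,r3,r4} \<Longrightarrow> f s \<in> {r0,r2,r3,r4}"
    proof -
      fix s assume s: "s \<in> {r0,r2,r3,r4}"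
      have "s \<in> V" "s \<noteq> r1" "s \<in> S" using s r0 r2 r3 r4 dist S_def by auto
      hence "c (f s) = 1" using cc unfolding c_def by auto
      thus "f s \<in> {r0,r2,r3,r4}" unfolding c_def S_def by (auto split: if_splits)
    qed
    have ad1: "\<And>s. s \<in> V \<Longrightarrow> E r1 (f s) \<longleftrightarrow> E r1 s"
      using fe r1(1) f1 by metis
    have fr0: "f r0 \<in> {r0, r2}" using inS[of r0] ad1[OF r0(1)] e10 e13 e14 by auto
    have fr2: "f r2 \<in> {r0, r2}" using inS[of r2] ad1[OF r2(1)] e12 e13 e14 by auto
    have fr3: "f r3 \<in> {r3, r4}" using inS[of r3] ad1[OF r3(1)] e10 e12 e13 by auto
    have fr4: "f r4 \<in> {r3, r4}" using inS[of r4] ad1[OF r4(1)] e10 e12 e14 by auto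
    have n02: "f r0 \<noteq> f r2" using finj r0 r2 dist unfolding inj_on_def by auto
    have n34: "f r3 \<noteq> f r4" using finj r3 r4 dist unfolding inj_on_def by auto
    have ne24: "\<not> E (f r2) (f r4)" using fe r2(1) r4(1) e24 by blast
    have g4: "f r4 = r4"
    proof (rule ccontr)
      assume "f r4 \<noteq> r4"
      hence "f r4 = r3" using fr4 by auto
      thus False using ne24 fr2 e03 e23 by auto
    qed
    have g3: "f r3 = r3" using fr3 g4 n34 by auto
    have g2: "f r2 = r2" using fr2 ne24 g4 e04 by auto
    have g0: "f r0 = r0" using fr0 g2 n02 by auto
    show "\<forall>v\<in>V. f v = v"
      using out f1 g0 g2 g3 g4 unfolding S_def by blast
  qed
  have "distinguishing_number V E \<le> card V - 3"
    unfolding distinguishing_number_def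
    by (rule Least_le) (use crange dis in blast)
  thus ?thesis using cV by linarith
qed

end
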